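(* Let $G_1,\dots,G_n$ be groups and $G\leqslant G_1\times\dots\times G_n$ a subgroup such that each projection $G\to G_i$ is surjective. For $j\in\{1,\dots,n\}$ let $S_j=\{1,\dots,n\}\setminus\{j\}$, view $G$ as a subgroup of $G_j\times G_{S_j}$ (surjecting onto both factors), and let $Q_j=G_j/N_j$ be the associated Goursat quotient, where $N_j=\{x\in G_j:(x,1)\in G\}$. Then $G$ has abelian entanglements with respect to $G_1\times\dots\times G_n$ if and only if $Q_j$ is abelian for every $j\in\{1,\dots,n\}$.
   Context: For nonempty $S\subseteq\{1,\dots,n\}$, $G_S$ denotes the image of $G$ in $\prod_{i\in S}G_i$ (and $G_\emptyset$ is the trivial group). For a partition $\mathcal P=\{S,T\}$ of $\{1,\dots,n\}$ into two nonempty sets, $G\leqslant G_S\times G_T$ surjects onto both factors; with $N_S=\{x\in G_S:(x,1)\in G\}$ (normal in $G_S$) the Goursat quotient is $Q_{\mathcal P}=G_S/N_S$. $G$ has abelian entanglements with respect to $G_1\times\dots\times G_n$ if $Q_{\mathcal P}$ is abelian for every such partition $\mathcal P$. *)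

theory Defs
  imports "HOL-Algebra.Algebra"
begin

text \<open>G is a subgroup H of product_group I Gs (I = {1..n}); elements are
  extensional functions on I.\<close>

definition proj_image :: "('i \<Rightarrow> 'a) set \<Rightarrow> 'i set \<Rightarrow> ('i \<Rightarrow> 'a) set" where
  "proj_image H S = (\<lambda>x. restrict x S) ` H"

definition goursat_kernel ::
  "'i set \<Rightarrow> ('i \<Rightarrow> ('a, 'c) monoid_scheme) \<Rightarrow> ('i \<Rightarrow> 'a) set \<Rightarrow> 'i set \<Rightarrow> ('i \<Rightarrow> 'a) set" where
  "goursat_kernel I Gs H S =
     {y \<in> proj_image H S. (\<lambda>i\<in>I. if i \<in> S then y i else \<one>\<^bsub>Gs i\<^esub>) \<in> H}"

definition goursat_quotient ::
  "'i set \<Rightarrow> ('i \<Rightarrow> ('a, 'c) monoid_scheme) \<Rightarrow> ('i \<Rightarrow> 'a) set \<Rightarrow> 'i set \<Rightarrow> ('i \<Rightarrow> 'a) set monoid" where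
  "goursat_quotient I Gs H S =
     subgroup_generated (product_group S Gs) (proj_image H S) Mod goursat_kernel I Gs H S"

definition abelian_entanglements ::
  "'i set \<Rightarrow> ('i \<Rightarrow> ('a, 'c) monoid_scheme) \<Rightarrow> ('i \<Rightarrow> 'a) set \<Rightarrow> bool" where
  "abelian_entanglements I Gs H \<longleftrightarrow>
     (\<forall>S T. S \<noteq> {} \<and> T \<noteq> {} \<and> S \<inter> T = {} \<and> S \<union> T = I \<longrightarrow>
        comm_group (goursat_quotient I Gs H S))"

definition coord_kernel ::
  "'i set \<Rightarrow> ('i \<Rightarrow> ('a, 'c) monoid_scheme) \<Rightarrow> ('i \<Rightarrow> 'a) set \<Rightarrow> 'i \<Rightarrow> 'a set" where
  "coord_kernel I Gs H j =
     {x \<in> carrier (Gs j). (\<lambda>i\<in>I. if i = j then x else \<one>\<^bsub>Gs i\<^esub>) \<in> H}"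

end

theory Submission
  imports Defs
begin

lemma comm_quot_iff:
  fixes G (structure)
  assumes G: "group G" and N: "N \<lhd> G"
  shows "comm_group (G Mod N) \<longleftrightarrow>
    (\<forall>x\<in>carrier G. \<forall>y\<in>carrier G. x \<otimes>\<^bsub>G\<^esub> y \<in> N #>\<^bsub>G\<^esub> (y \<otimes>\<^bsub>G\<^esub> x))"
proof -
  interpret normal N G by (rule N)
  have key: "(N #> (x \<otimes> y) = N #> (y \<otimes> x)) \<longleftrightarrow> x \<otimes> y \<in> N #> (y \<otimes> x)"
    if "x \<in> carrier G" "y \<in> carrier G" for x y
    using that by (metis m_closed rcos_self repr_independence subgroup_axioms)
  show ?thesis
  proof
    assume c: "comm_group (G Mod N)"
    show "\<forall>x\<in>carrier G. \<forall>y\<in>carrier G. x \<otimes> y \<in> N #> (y \<otimes> x)"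
    proof (intro ballI)
      fix x y assume xy: "x \<in> carrier G" "y \<in> carrier G"
      have "N #> x \<in> carrier (G Mod N)" "N #> y \<in> carrier (G Mod N)"
        using xy by (auto simp: carrier_FactGroup)
      then have "(N #> x) <#> (N #> y) = (N #> y) <#> (N #> x)"
        using comm_monoid.m_comm[OF comm_group.axioms(1)[OF c]] by (simp add: FactGroup_def)
      then show "x \<otimes> y \<in> N #> (y \<otimes> x)" using xy key rcos_sum by metis
    qed
  next
    assume h: "\<forall>x\<in>carrier G. \<forall>y\<in>carrier G. x \<otimes> y \<in> N #> (y \<otimes> x)"
    show "comm_group (G Mod N)"
    proof (rule group.group_comm_groupI[OF factorgroup_is_group])
      fix a b assume "a \<in> carrier (G Mod N)" "b \<in> carrier (G Mod N)"
      then obtain x y where xy: "x \<in> carrier G" "y \<in> carrier G" "a = N #> x" "b = N #> y"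
        by (auto simp: carrier_FactGroup)
      then show "a \<otimes>\<^bsub>G Mod N\<^esub> b = b \<otimes>\<^bsub>G Mod N\<^esub> a"
        using h key rcos_sum by (simp add: FactGroup_def)
    qed
  qed
qed

locale ent =
  fixes I :: "'i set" and Gs :: "'i \<Rightarrow> ('a, 'c) monoid_scheme" and H :: "('i \<Rightarrow> 'a) set"
  assumes fin: "finite I"
    and groups: "\<And>i. i \<in> I \<Longrightarrow> group (Gs i)"
    and sub: "subgroup H (product_group I Gs)"
    and surj: "\<And>j. j \<in> I \<Longrightarrow> (\<lambda>x. x j) ` H = carrier (Gs j)"
begin

abbreviation "P \<equiv> product_group I Gs"

definition ext :: "'i set \<Rightarrow> ('i \<Rightarrow> 'a) \<Rightarrow> ('i \<Rightarrow> 'a)" where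
  "ext S y = (\<lambda>i\<in>I. if i \<in> S then y i else \<one>\<^bsub>Gs i\<^esub>)"

lemma grpP: "group P" using groups by simp

lemma H_car: "h \<in> H \<Longrightarrow> h \<in> (\<Pi>\<^sub>E i\<in>I. carrier (Gs i))"
  using subgroup.subset[OF sub] by auto

lemma H_coord: "h \<in> H \<Longrightarrow> i \<in> I \<Longrightarrow> h i \<in> carrier (Gs i)"
  using H_car by auto

lemma H_mult: "g \<in> H \<Longrightarrow> h \<in> H \<Longrightarrow> (\<lambda>i\<in>I. g i \<otimes>\<^bsub>Gs i\<^esub> h i) \<in> H"
  using subgroup.m_closed[OF sub, of g h] by simp

lemma H_inv: "g \<in> H \<Longrightarrow> (\<lambda>i\<in>I. inv\<^bsub>Gs i\<^esub> g i) \<in> H"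
  using subgroup.m_inv_closed[OF sub, of g] H_car groups by simp

lemma H_one: "(\<lambda>i\<in>I. \<one>\<^bsub>Gs i\<^esub>) \<in> H"
  using subgroup.one_closed[OF sub] by simp

lemma proj_sub:
  assumes "S \<subseteq> I" shows "subgroup (proj_image H S) (product_group S Gs)"
proof -
  have IS: "I \<inter> S = S" using assms by blast
  have "group_hom P (product_group S Gs) (\<lambda>x. restrict x S)"
  proof (rule group_hom.intro)
    show "group P" by (rule grpP)
    show "group (product_group S Gs)" using groups assms by (intro product_group) auto
    show "group_hom_axioms P (product_group S Gs) (\<lambda>x. restrict x S)"
      unfolding group_hom_axioms_def hom_def using assms by (auto simp: PiE_iff IS intro!: restrict_ext)
  qed
  then show ?thesis unfolding proj_image_def
    using group_hom.subgroup_img_is_subgroup sub by blast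
qed

lemma kernel_eq:
  assumes "S \<subseteq> I"
  shows "goursat_kernel I Gs H S = {y \<in> (\<Pi>\<^sub>E i\<in>S. carrier (Gs i)). ext S y \<in> H}"
proof -
  have IS: "I \<inter> S = S" using assms by blast
  have "y \<in> proj_image H S" if "y \<in> (\<Pi>\<^sub>E i\<in>S. carrier (Gs i))" "ext S y \<in> H" for y
  proof -
    have "y = restrict (ext S y) S" using that assms by (auto simp: ext_def PiE_iff extensional_def IS)
    then show ?thesis using that unfolding proj_image_def by blast
  qed
  moreover have "proj_image H S \<subseteq> (\<Pi>\<^sub>E i\<in>S. carrier (Gs i))"
    using subgroup.subset[OF proj_sub[OF assms]] by simp
  ultimately show ?thesis unfolding goursat_kernel_def ext_def by auto
qed


lemma gi:
  assumes "i \<in> I"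
  shows "x \<in> carrier (Gs i) \<Longrightarrow> x \<otimes>\<^bsub>Gs i\<^esub> \<one>\<^bsub>Gs i\<^esub> = x"
    "x \<in> carrier (Gs i) \<Longrightarrow> \<one>\<^bsub>Gs i\<^esub> \<otimes>\<^bsub>Gs i\<^esub> x = x"
    "inv\<^bsub>Gs i\<^esub> \<one>\<^bsub>Gs i\<^esub> = \<one>\<^bsub>Gs i\<^esub>"
    "x \<in> carrier (Gs i) \<Longrightarrow> x \<otimes>\<^bsub>Gs i\<^esub> inv\<^bsub>Gs i\<^esub> x = \<one>\<^bsub>Gs i\<^esub>"
    "\<one>\<^bsub>Gs i\<^esub> \<in> carrier (Gs i)"
  using groups[OF assms] by (auto simp: group.r_inv monoid.inv_one monoid.l_one monoid.r_one group.is_monoid)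

lemma invS:
  assumes "S \<subseteq> I" "a \<in> (\<Pi>\<^sub>E i\<in>S. carrier (Gs i))"
  shows "inv\<^bsub>product_group S Gs\<^esub> a = (\<lambda>i\<in>S. inv\<^bsub>Gs i\<^esub> a i)"
  using assms groups by (intro inv_product_group) auto

lemma K_sub:
  assumes "S \<subseteq> I"
  shows "subgroup (goursat_kernel I Gs H S) (product_group S Gs)"
proof -
  have IS: "I \<inter> S = S" using assms by blast
  have gS: "group (product_group S Gs)" using groups assms by (intro product_group) auto
  show ?thesis unfolding kernel_eq[OF assms]
  proof (rule group.subgroupI[OF gS])
    show "{y \<in> \<Pi>\<^sub>E i\<in>S. carrier (Gs i). ext S y \<in> H} \<noteq> {}"
    proof -
      have "ext S (\<lambda>i\<in>S. \<one>\<^bsub>Gs i\<^esub>) = (\<lambda>i\<in>I. \<one>\<^bsub>Gs i\<^esub>)"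
        by (auto simp: ext_def)
      then show ?thesis using H_one assms gi by (auto intro!: exI[of _ "\<lambda>i\<in>S. \<one>\<^bsub>Gs i\<^esub>"])
    qed
  next
    fix a assume a: "a \<in> {y \<in> \<Pi>\<^sub>E i\<in>S. carrier (Gs i). ext S y \<in> H}"
    then have "ext S (inv\<^bsub>product_group S Gs\<^esub> a) = (\<lambda>i\<in>I. inv\<^bsub>Gs i\<^esub> (ext S a) i)"
      using assms groups gi by (auto simp: ext_def invS)
    moreover have "inv\<^bsub>product_group S Gs\<^esub> a \<in> (\<Pi>\<^sub>E i\<in>S. carrier (Gs i))"
      using group.inv_closed[OF gS, of a] a by simp
    ultimately show "inv\<^bsub>product_group S Gs\<^esub> a \<in> {y \<in> \<Pi>\<^sub>E i\<in>S. carrier (Gs i). ext S y \<in> H}"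
      using H_inv a by auto
  next
    fix a b assume a: "a \<in> {y \<in> \<Pi>\<^sub>E i\<in>S. carrier (Gs i). ext S y \<in> H}"
      and b: "b \<in> {y \<in> \<Pi>\<^sub>E i\<in>S. carrier (Gs i). ext S y \<in> H}"
    then have "ext S (a \<otimes>\<^bsub>product_group S Gs\<^esub> b) = (\<lambda>i\<in>I. (ext S a) i \<otimes>\<^bsub>Gs i\<^esub> (ext S b) i)"
      using assms groups gi by (auto simp: ext_def)
    moreover have "a \<otimes>\<^bsub>product_group S Gs\<^esub> b \<in> (\<Pi>\<^sub>E i\<in>S. carrier (Gs i))"
      using monoid.m_closed[OF group.is_monoid[OF gS], of a b] a b by simp
    ultimately show "a \<otimes>\<^bsub>product_group S Gs\<^esub> b \<in> {y \<in> \<Pi>\<^sub>E i\<in>S. carrier (Gs i). ext S y \<in> H}"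
      using H_mult a b by auto
  qed auto
qed


lemma quotS_iff:
  assumes SI: "S \<subseteq> I"
  shows "comm_group (goursat_quotient I Gs H S) \<longleftrightarrow>
    (\<forall>x\<in>proj_image H S. \<forall>y\<in>proj_image H S. \<exists>k\<in>goursat_kernel I Gs H S.
       x \<otimes>\<^bsub>product_group S Gs\<^esub> y = k \<otimes>\<^bsub>product_group S Gs\<^esub> (y \<otimes>\<^bsub>product_group S Gs\<^esub> x))"
proof -
  let ?PS = "product_group S Gs"
  let ?GS = "subgroup_generated ?PS (proj_image H S)"
  let ?K = "goursat_kernel I Gs H S"
  have gS: "group ?PS" using groups SI by (intro product_group) auto
  have gGS: "group ?GS" using group.group_subgroup_generated[OF gS] .
  have cGS: "carrier ?GS = proj_image H S"
    using subgroup.carrier_subgroup_generated_subgroup[OF proj_sub[OF SI]] .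
  have Ksub: "?K \<subseteq> proj_image H S" unfolding goursat_kernel_def by auto
  have KGS: "subgroup ?K ?GS"
    using group.subgroup_subgroup_generated_iff[OF gS] K_sub[OF SI] Ksub cGS by auto
  have pc: "proj_image H S \<subseteq> (\<Pi>\<^sub>E i\<in>S. carrier (Gs i))"
    using subgroup.subset[OF proj_sub[OF SI]] by simp
  have norm: "?K \<lhd> ?GS"
  proof (rule group.normal_invI[OF gGS KGS])
    fix x h assume x: "x \<in> carrier ?GS" and h: "h \<in> ?K"
    have invx: "inv\<^bsub>?GS\<^esub> x = inv\<^bsub>?PS\<^esub> x"
      using group.inv_subgroup_generated[OF gS x] .
    from x cGS obtain g where g: "g \<in> H" "x = restrict g S" unfolding proj_image_def by auto
    have hK: "h \<in> (\<Pi>\<^sub>E i\<in>S. carrier (Gs i))" "ext S h \<in> H"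
      using h kernel_eq[OF SI] by auto
    have xc: "x \<in> (\<Pi>\<^sub>E i\<in>S. carrier (Gs i))" using x cGS pc by auto
    let ?c = "x \<otimes>\<^bsub>?PS\<^esub> h \<otimes>\<^bsub>?PS\<^esub> inv\<^bsub>?PS\<^esub> x"
    have cc: "?c \<in> (\<Pi>\<^sub>E i\<in>S. carrier (Gs i))"
      using xc hK gS by (metis carrier_product_group group.inv_closed monoid.m_closed group.is_monoid)
    have e: "ext S ?c = (\<lambda>i\<in>I. (\<lambda>i\<in>I. g i \<otimes>\<^bsub>Gs i\<^esub> (ext S h) i) i \<otimes>\<^bsub>Gs i\<^esub> (\<lambda>i\<in>I. inv\<^bsub>Gs i\<^esub> g i) i)"
      using xc g hK SI gi H_coord[OF g(1)] by (auto simp: ext_def invS)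
    have "(\<lambda>i\<in>I. (\<lambda>i\<in>I. g i \<otimes>\<^bsub>Gs i\<^esub> (ext S h) i) i \<otimes>\<^bsub>Gs i\<^esub> (\<lambda>i\<in>I. inv\<^bsub>Gs i\<^esub> g i) i) \<in> H"
      by (rule H_mult[OF H_mult[OF g(1) hK(2)] H_inv[OF g(1)]])
    then have "ext S ?c \<in> H" by (simp only: e)
    then show "x \<otimes>\<^bsub>?GS\<^esub> h \<otimes>\<^bsub>?GS\<^esub> inv\<^bsub>?GS\<^esub> x \<in> ?K"
      using invx cc kernel_eq[OF SI] by simp
  qed
  show ?thesis
    unfolding goursat_quotient_def comm_quot_iff[OF gGS norm] cGS
    by (simp add: r_coset_def)
qed


lemma grp_cancel:
  assumes "group G" "a \<in> carrier G" "c \<in> carrier G"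
  shows "a \<otimes>\<^bsub>G\<^esub> inv\<^bsub>G\<^esub> c \<otimes>\<^bsub>G\<^esub> c = a"
  using assms by (simp add: group.inv_closed group.l_inv monoid.m_assoc group.is_monoid monoid.r_one)

lemma Nj_sub:
  assumes jI: "j \<in> I"
  shows "subgroup (coord_kernel I Gs H j) (Gs j)"
proof (rule group.subgroupI[OF groups[OF jI]])
  show "coord_kernel I Gs H j \<subseteq> carrier (Gs j)" unfolding coord_kernel_def by auto
  have "(\<lambda>i\<in>I. if i = j then \<one>\<^bsub>Gs j\<^esub> else \<one>\<^bsub>Gs i\<^esub>) = (\<lambda>i\<in>I. \<one>\<^bsub>Gs i\<^esub>)" by auto
  then have "\<one>\<^bsub>Gs j\<^esub> \<in> coord_kernel I Gs H j"
    unfolding coord_kernel_def using H_one gi(5)[OF jI] by simp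
  then show "coord_kernel I Gs H j \<noteq> {}" by blast
next
  fix a assume a: "a \<in> coord_kernel I Gs H j"
  then have ac: "a \<in> carrier (Gs j)" "(\<lambda>i\<in>I. if i = j then a else \<one>\<^bsub>Gs i\<^esub>) \<in> H"
    unfolding coord_kernel_def by auto
  have e: "(\<lambda>i\<in>I. if i = j then inv\<^bsub>Gs j\<^esub> a else \<one>\<^bsub>Gs i\<^esub>)
     = (\<lambda>i\<in>I. inv\<^bsub>Gs i\<^esub> (\<lambda>i\<in>I. if i = j then a else \<one>\<^bsub>Gs i\<^esub>) i)"
    using gi by auto
  have "(\<lambda>i\<in>I. inv\<^bsub>Gs i\<^esub> (\<lambda>i\<in>I. if i = j then a else \<one>\<^bsub>Gs i\<^esub>) i) \<in> H"
    by (rule H_inv[OF ac(2)])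
  then have "(\<lambda>i\<in>I. if i = j then inv\<^bsub>Gs j\<^esub> a else \<one>\<^bsub>Gs i\<^esub>) \<in> H" by (simp only: e)
  then show "inv\<^bsub>Gs j\<^esub> a \<in> coord_kernel I Gs H j"
    using ac groups[OF jI] unfolding coord_kernel_def by (auto simp: group.inv_closed)
next
  fix a b assume a: "a \<in> coord_kernel I Gs H j" and b: "b \<in> coord_kernel I Gs H j"
  then have ac: "a \<in> carrier (Gs j)" "(\<lambda>i\<in>I. if i = j then a else \<one>\<^bsub>Gs i\<^esub>) \<in> H"
    and bc: "b \<in> carrier (Gs j)" "(\<lambda>i\<in>I. if i = j then b else \<one>\<^bsub>Gs i\<^esub>) \<in> H"
    unfolding coord_kernel_def by auto
  have e: "(\<lambda>i\<in>I. if i = j then a \<otimes>\<^bsub>Gs j\<^esub> b else \<one>\<^bsub>Gs i\<^esub>)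
     = (\<lambda>i\<in>I. (\<lambda>i\<in>I. if i = j then a else \<one>\<^bsub>Gs i\<^esub>) i \<otimes>\<^bsub>Gs i\<^esub> (\<lambda>i\<in>I. if i = j then b else \<one>\<^bsub>Gs i\<^esub>) i)"
    using gi by auto
  have "(\<lambda>i\<in>I. (\<lambda>i\<in>I. if i = j then a else \<one>\<^bsub>Gs i\<^esub>) i \<otimes>\<^bsub>Gs i\<^esub> (\<lambda>i\<in>I. if i = j then b else \<one>\<^bsub>Gs i\<^esub>) i) \<in> H"
    by (rule H_mult[OF ac(2) bc(2)])
  then have "(\<lambda>i\<in>I. if i = j then a \<otimes>\<^bsub>Gs j\<^esub> b else \<one>\<^bsub>Gs i\<^esub>) \<in> H" by (simp only: e)
  then show "a \<otimes>\<^bsub>Gs j\<^esub> b \<in> coord_kernel I Gs H j"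
    using ac bc groups[OF jI] unfolding coord_kernel_def
    by (auto simp: monoid.m_closed group.is_monoid)
qed

lemma quotj_iff:
  assumes jI: "j \<in> I"
  shows "comm_group (Gs j Mod coord_kernel I Gs H j) \<longleftrightarrow>
    (\<forall>a\<in>carrier (Gs j). \<forall>b\<in>carrier (Gs j). \<exists>k\<in>coord_kernel I Gs H j.
       a \<otimes>\<^bsub>Gs j\<^esub> b = k \<otimes>\<^bsub>Gs j\<^esub> (b \<otimes>\<^bsub>Gs j\<^esub> a))"
proof -
  have gj: "group (Gs j)" by (rule groups[OF jI])
  have norm: "coord_kernel I Gs H j \<lhd> Gs j"
  proof (rule group.normal_invI[OF gj Nj_sub[OF jI]])
    fix a x assume a: "a \<in> carrier (Gs j)" and x: "x \<in> coord_kernel I Gs H j"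
    obtain g where g: "g \<in> H" "g j = a" using surj[OF jI] a by force
    have xc: "x \<in> carrier (Gs j)" "(\<lambda>i\<in>I. if i = j then x else \<one>\<^bsub>Gs i\<^esub>) \<in> H"
      using x unfolding coord_kernel_def by auto
    have e: "(\<lambda>i\<in>I. if i = j then a \<otimes>\<^bsub>Gs j\<^esub> x \<otimes>\<^bsub>Gs j\<^esub> inv\<^bsub>Gs j\<^esub> a else \<one>\<^bsub>Gs i\<^esub>)
      = (\<lambda>i\<in>I. (\<lambda>i\<in>I. g i \<otimes>\<^bsub>Gs i\<^esub> (\<lambda>i\<in>I. if i = j then x else \<one>\<^bsub>Gs i\<^esub>) i) i \<otimes>\<^bsub>Gs i\<^esub> (\<lambda>i\<in>I. inv\<^bsub>Gs i\<^esub> g i) i)"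
      using g gi H_coord[OF g(1)] by auto
    have "(\<lambda>i\<in>I. (\<lambda>i\<in>I. g i \<otimes>\<^bsub>Gs i\<^esub> (\<lambda>i\<in>I. if i = j then x else \<one>\<^bsub>Gs i\<^esub>) i) i \<otimes>\<^bsub>Gs i\<^esub> (\<lambda>i\<in>I. inv\<^bsub>Gs i\<^esub> g i) i) \<in> H"
      by (rule H_mult[OF H_mult[OF g(1) xc(2)] H_inv[OF g(1)]])
    then have "(\<lambda>i\<in>I. if i = j then a \<otimes>\<^bsub>Gs j\<^esub> x \<otimes>\<^bsub>Gs j\<^esub> inv\<^bsub>Gs j\<^esub> a else \<one>\<^bsub>Gs i\<^esub>) \<in> H"
      by (simp only: e)
    then show "a \<otimes>\<^bsub>Gs j\<^esub> x \<otimes>\<^bsub>Gs j\<^esub> inv\<^bsub>Gs j\<^esub> a \<in> coord_kernel I Gs H j"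
      unfolding coord_kernel_def using a xc gj
      by (auto simp: monoid.m_closed group.is_monoid group.inv_closed)
  qed
  show ?thesis unfolding comm_quot_iff[OF gj norm] by (simp add: r_coset_def)
qed

lemma fin_prod:
  "finite F \<Longrightarrow> F \<subseteq> I \<Longrightarrow> z \<in> (\<Pi>\<^sub>E i\<in>I. carrier (Gs i)) \<Longrightarrow> (\<forall>i\<in>I-F. z i = \<one>\<^bsub>Gs i\<^esub>)
   \<Longrightarrow> (\<forall>i\<in>F. z i \<in> coord_kernel I Gs H i) \<Longrightarrow> z \<in> H"
proof (induction F arbitrary: z rule: finite_induct)
  case empty
  then have "z = (\<lambda>i\<in>I. \<one>\<^bsub>Gs i\<^esub>)" by (auto simp: PiE_iff extensional_def)
  then show ?case using H_one by (simp only:)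
next
  case (insert j F)
  define z' where "z' = (\<lambda>i\<in>I. if i = j then \<one>\<^bsub>Gs i\<^esub> else z i)"
  have "z' \<in> (\<Pi>\<^sub>E i\<in>I. carrier (Gs i))"
    using insert.prems gi unfolding z'_def by (auto simp: PiE_iff)
  moreover have "\<forall>i\<in>I-F. z' i = \<one>\<^bsub>Gs i\<^esub>"
    using insert.prems unfolding z'_def by auto
  moreover have "\<forall>i\<in>F. z' i \<in> coord_kernel I Gs H i"
    using insert.prems insert.hyps unfolding z'_def by auto
  ultimately have "z' \<in> H" using insert.IH insert.prems by blast
  moreover have d: "(\<lambda>i\<in>I. if i = j then z j else \<one>\<^bsub>Gs i\<^esub>) \<in> H"
    using insert.prems unfolding coord_kernel_def by auto
  moreover have "z = (\<lambda>i\<in>I. z' i \<otimes>\<^bsub>Gs i\<^esub> (\<lambda>i\<in>I. if i = j then z j else \<one>\<^bsub>Gs i\<^esub>) i)"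
    using insert.prems gi unfolding z'_def by (auto simp: PiE_iff extensional_def)
  ultimately show ?case using H_mult by metis
qed


theorem main:
  "abelian_entanglements I Gs H \<longleftrightarrow> (\<forall>j\<in>I. comm_group (Gs j Mod coord_kernel I Gs H j))"
proof
  assume A: "abelian_entanglements I Gs H"
  show "\<forall>j\<in>I. comm_group (Gs j Mod coord_kernel I Gs H j)"
  proof
    fix j assume jI: "j \<in> I"
    have gj: "group (Gs j)" by (rule groups[OF jI])
    show "comm_group (Gs j Mod coord_kernel I Gs H j)"
      unfolding quotj_iff[OF jI]
    proof (intro ballI)
      fix a b assume a: "a \<in> carrier (Gs j)" and b: "b \<in> carrier (Gs j)"
      show "\<exists>k\<in>coord_kernel I Gs H j. a \<otimes>\<^bsub>Gs j\<^esub> b = k \<otimes>\<^bsub>Gs j\<^esub> (b \<otimes>\<^bsub>Gs j\<^esub> a)"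
      proof (cases "I = {j}")
        case True
        let ?k = "(a \<otimes>\<^bsub>Gs j\<^esub> b) \<otimes>\<^bsub>Gs j\<^esub> inv\<^bsub>Gs j\<^esub> (b \<otimes>\<^bsub>Gs j\<^esub> a)"
        have kc: "?k \<in> carrier (Gs j)" using a b gj
          by (simp add: group.inv_closed monoid.m_closed group.is_monoid)
        then obtain g where g: "g \<in> H" "g j = ?k" using surj[OF jI] by force
        have "(\<lambda>i\<in>I. if i = j then ?k else \<one>\<^bsub>Gs i\<^esub>) = g"
          using H_car[OF g(1)] g(2) True by (auto simp: PiE_iff extensional_def)
        then have "?k \<in> coord_kernel I Gs H j" using g kc unfolding coord_kernel_def by auto
        moreover have "a \<otimes>\<^bsub>Gs j\<^esub> b = ?k \<otimes>\<^bsub>Gs j\<^esub> (b \<otimes>\<^bsub>Gs j\<^esub> a)"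
          using grp_cancel[OF gj, of "a \<otimes>\<^bsub>Gs j\<^esub> b" "b \<otimes>\<^bsub>Gs j\<^esub> a"] a b gj
          by (simp add: group.inv_closed monoid.m_closed group.is_monoid monoid.m_assoc)
        ultimately show ?thesis by blast
      next
        case False
        have SI: "{j} \<subseteq> I" using jI by auto
        have "{j} \<noteq> {} \<and> I - {j} \<noteq> {} \<and> {j} \<inter> (I - {j}) = {} \<and> {j} \<union> (I - {j}) = I"
          using False jI by auto
        then have "comm_group (goursat_quotient I Gs H {j})"
          by (rule A[unfolded abelian_entanglements_def, rule_format])
        then have C: "\<forall>x\<in>proj_image H {j}. \<forall>y\<in>proj_image H {j}. \<exists>k\<in>goursat_kernel I Gs H {j}.
           x \<otimes>\<^bsub>product_group {j} Gs\<^esub> y = k \<otimes>\<^bsub>product_group {j} Gs\<^esub> (y \<otimes>\<^bsub>product_group {j} Gs\<^esub> x)"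
          using quotS_iff[OF SI] by blast
        have inP: "(\<lambda>i\<in>{j}. c) \<in> proj_image H {j}" if cc: "c \<in> carrier (Gs j)" for c
        proof -
          obtain g where g: "g \<in> H" "g j = c" using surj[OF jI] cc by force
          then have e: "(\<lambda>i\<in>{j}. c) = restrict g {j}" by auto
          show ?thesis unfolding proj_image_def by (rule image_eqI[where f="\<lambda>x. restrict x {j}", OF e g(1)])
        qed
        obtain k where k: "k \<in> goursat_kernel I Gs H {j}"
          and eq: "(\<lambda>i\<in>{j}. a) \<otimes>\<^bsub>product_group {j} Gs\<^esub> (\<lambda>i\<in>{j}. b) =
             k \<otimes>\<^bsub>product_group {j} Gs\<^esub> ((\<lambda>i\<in>{j}. b) \<otimes>\<^bsub>product_group {j} Gs\<^esub> (\<lambda>i\<in>{j}. a))"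
          using C inP[OF a] inP[OF b] by blast
        have kk: "k \<in> (\<Pi>\<^sub>E i\<in>{j}. carrier (Gs i))" "ext {j} k \<in> H"
          using k kernel_eq[OF SI] by auto
        have "(\<lambda>i\<in>I. if i = j then k j else \<one>\<^bsub>Gs i\<^esub>) = ext {j} k"
          unfolding ext_def by auto
        then have "k j \<in> coord_kernel I Gs H j" using kk unfolding coord_kernel_def by auto
        moreover have "a \<otimes>\<^bsub>Gs j\<^esub> b = k j \<otimes>\<^bsub>Gs j\<^esub> (b \<otimes>\<^bsub>Gs j\<^esub> a)"
          using fun_cong[OF eq, of j] by simp
        ultimately show ?thesis by blast
      qed
    qed
  qed
next
  assume B: "\<forall>j\<in>I. comm_group (Gs j Mod coord_kernel I Gs H j)"
  then have B': "\<forall>j\<in>I. \<forall>a\<in>carrier (Gs j). \<forall>b\<in>carrier (Gs j). \<exists>k\<in>coord_kernel I Gs H j.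
       a \<otimes>\<^bsub>Gs j\<^esub> b = k \<otimes>\<^bsub>Gs j\<^esub> (b \<otimes>\<^bsub>Gs j\<^esub> a)"
    using quotj_iff by blast
  show "abelian_entanglements I Gs H"
    unfolding abelian_entanglements_def
  proof (intro allI impI)
    fix S T assume ST: "S \<noteq> {} \<and> T \<noteq> {} \<and> S \<inter> T = {} \<and> S \<union> T = I"
    have SI: "S \<subseteq> I" and TI: "T \<subseteq> I" and TS: "T = I - S" using ST by auto
    show "comm_group (goursat_quotient I Gs H S)"
      unfolding quotS_iff[OF SI]
    proof (intro ballI)
      fix x y assume x: "x \<in> proj_image H S" and y: "y \<in> proj_image H S"
      obtain g where g: "g \<in> H" "x = restrict g S" using x unfolding proj_image_def by auto
      obtain h where h: "h \<in> H" "y = restrict h S" using y unfolding proj_image_def by auto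
      have "\<forall>j\<in>T. \<exists>c. c \<in> coord_kernel I Gs H j \<and>
          g j \<otimes>\<^bsub>Gs j\<^esub> h j = c \<otimes>\<^bsub>Gs j\<^esub> (h j \<otimes>\<^bsub>Gs j\<^esub> g j)"
        using B' TI H_coord g(1) h(1) by blast
      then obtain kk where kk: "\<And>j. j \<in> T \<Longrightarrow> kk j \<in> coord_kernel I Gs H j \<and>
          g j \<otimes>\<^bsub>Gs j\<^esub> h j = kk j \<otimes>\<^bsub>Gs j\<^esub> (h j \<otimes>\<^bsub>Gs j\<^esub> g j)"
        by metis
      define z where "z = (\<lambda>i\<in>I. if i \<in> T then kk i else \<one>\<^bsub>Gs i\<^esub>)"
      have kkc: "j \<in> T \<Longrightarrow> kk j \<in> carrier (Gs j)" for j
        using kk unfolding coord_kernel_def by auto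
      have zH: "z \<in> H"
      proof (rule fin_prod[of T])
        show "finite T" using TI fin finite_subset by blast
        show "T \<subseteq> I" by (rule TI)
        show "z \<in> (\<Pi>\<^sub>E i\<in>I. carrier (Gs i))" using kkc gi unfolding z_def by auto
        show "\<forall>i\<in>I - T. z i = \<one>\<^bsub>Gs i\<^esub>" unfolding z_def by auto
        show "\<forall>i\<in>T. z i \<in> coord_kernel I Gs H i" using kk TI unfolding z_def by auto
      qed
      define m where "m = (\<lambda>i\<in>I. (\<lambda>i\<in>I. g i \<otimes>\<^bsub>Gs i\<^esub> h i) i \<otimes>\<^bsub>Gs i\<^esub>
          (\<lambda>i\<in>I. inv\<^bsub>Gs i\<^esub> (\<lambda>i\<in>I. z i \<otimes>\<^bsub>Gs i\<^esub> (\<lambda>i\<in>I. h i \<otimes>\<^bsub>Gs i\<^esub> g i) i) i) i)"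
      have mH: "m \<in> H" unfolding m_def
        by (rule H_mult[OF H_mult[OF g(1) h(1)] H_inv[OF H_mult[OF zH H_mult[OF h(1) g(1)]]]])
      have mS: "i \<in> S \<Longrightarrow> m i = (g i \<otimes>\<^bsub>Gs i\<^esub> h i) \<otimes>\<^bsub>Gs i\<^esub> inv\<^bsub>Gs i\<^esub> (h i \<otimes>\<^bsub>Gs i\<^esub> g i)" for i
        using SI TS gi H_coord[OF g(1)] H_coord[OF h(1)] groups
        unfolding m_def z_def by (auto simp: monoid.m_closed group.is_monoid)
      have mT: "i \<in> T \<Longrightarrow> m i = \<one>\<^bsub>Gs i\<^esub>" for i
        using TI gi H_coord[OF g(1)] H_coord[OF h(1)] groups kk[of i] kkc[of i]
        unfolding m_def z_def by (auto simp: monoid.m_closed group.is_monoid)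
      let ?k = "restrict m S"
      have kc: "?k \<in> (\<Pi>\<^sub>E i\<in>S. carrier (Gs i))"
        using mH H_coord SI by auto
      have "ext S ?k = m"
        using H_car[OF mH] mT TS unfolding ext_def by (auto simp: PiE_iff extensional_def)
      then have kK: "?k \<in> goursat_kernel I Gs H S"
        using kc mH kernel_eq[OF SI] by auto
      have "x \<otimes>\<^bsub>product_group S Gs\<^esub> y = ?k \<otimes>\<^bsub>product_group S Gs\<^esub> (y \<otimes>\<^bsub>product_group S Gs\<^esub> x)"
      proof -
        have "g i \<otimes>\<^bsub>Gs i\<^esub> h i = m i \<otimes>\<^bsub>Gs i\<^esub> (h i \<otimes>\<^bsub>Gs i\<^esub> g i)" if "i \<in> S" for i
        proof -
          have iI: "i \<in> I" using that SI by auto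
          show ?thesis unfolding mS[OF that]
            using grp_cancel[OF groups[OF iI], of "g i \<otimes>\<^bsub>Gs i\<^esub> h i" "h i \<otimes>\<^bsub>Gs i\<^esub> g i"]
              H_coord[OF g(1) iI] H_coord[OF h(1) iI] groups[OF iI]
            by (simp add: monoid.m_closed group.is_monoid)
        qed
        then show ?thesis using g h by (auto intro!: restrict_ext)
      qed
      then show "\<exists>k\<in>goursat_kernel I Gs H S. x \<otimes>\<^bsub>product_group S Gs\<^esub> y =
          k \<otimes>\<^bsub>product_group S Gs\<^esub> (y \<otimes>\<^bsub>product_group S Gs\<^esub> x)"
        using kK by blast
    qed
  qed
qed

end

theorem corollary2p5:
  fixes n :: nat
    and Gs :: "nat \<Rightarrow> ('a, 'c) monoid_scheme"
    and H :: "(nat \<Rightarrow> 'a) set"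
  assumes groups: "\<And>i. i \<in> {1..n} \<Longrightarrow> group (Gs i)"
    and sub: "subgroup H (product_group {1..n} Gs)"
    and surj: "\<And>j. j \<in> {1..n} \<Longrightarrow> (\<lambda>x. x j) ` H = carrier (Gs j)"
  shows "abelian_entanglements {1..n} Gs H \<longleftrightarrow>
         (\<forall>j\<in>{1..n}. comm_group (Gs j Mod coord_kernel {1..n} Gs H j))"
proof -
  interpret ent "{1..n}" Gs H
    by (rule ent.intro[OF _ groups sub surj]) simp_all
  show ?thesis by (rule main)
qed

end
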